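(* Let $\varphi\in\mathcal G(X)$. For every one-dimensional subspace $Y\subset X$ and every $y\in Y\setminus\{0\}$, the limit $$(\tau_Y\varphi)(x):=\lim_{t\to+\infty}\varphi(x+ty)$$ exists for all $x\in X$ and does not depend on the choice of $y$. If $\tau_Y\varphi=0$ for all one-dimensional subspaces $Y$ of $X$, then $\varphi\in C_0(X)$.
   Context: Let $X$ be a finite-dimensional real vector space. For a vector subspace $Y\subset X$ let $\pi_Y:X\to X/Y$ be the quotient map. Identify $C_0(X/Y)$ (continuous functions on $X/Y$ vanishing at infinity) with the set of functions $\phi\circ\pi_Y$ on $X$; for $Y=X$ this gives the constants. The Grassmann algebra $\mathcal G(X)$ is the norm closure (in the sup norm) of $\sum_Y C_0(X/Y)$, the sum running over all vector subspaces $Y$ of $X$. *)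

theory Defs
  imports "HOL-Analysis.Analysis"
begin

text \<open>X is modelled by a type 'a of class euclidean_space (a finite-dimensional
real inner product space; any norm on a finite-dimensional space gives the same
topology). Functions are complex-valued.\<close>

text \<open>C_0(X/Y), identified with functions phi o pi_Y on X: continuous functions on X
that are invariant under translations by Y and vanish at infinity in X/Y, where the
quotient norm of the class of x is infdist x Y.\<close>
definition C0quot :: "'a::euclidean_space set \<Rightarrow> ('a \<Rightarrow> complex) set" where
  "C0quot Y = {f. continuous_on UNIV f \<and> (\<forall>x y. y \<in> Y \<longrightarrow> f (x + y) = f x) \<and>
      (\<forall>e>0. \<exists>R. \<forall>x. R \<le> infdist x Y \<longrightarrow> norm (f x) < e)}"

definition C0 :: "('a::euclidean_space \<Rightarrow> complex) set" where
  "C0 = {f. continuous_on UNIV f \<and> (f \<longlongrightarrow> 0) at_infinity}"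

definition GrassSum :: "('a::euclidean_space \<Rightarrow> complex) set" where
  "GrassSum = {f. \<exists>n::nat. \<exists>Ys g. (\<forall>i<n. subspace (Ys i) \<and> g i \<in> C0quot (Ys i)) \<and>
                   f = (\<lambda>x. \<Sum>i<n. g i x)}"

definition Grassmann :: "('a::euclidean_space \<Rightarrow> complex) set" where
  "Grassmann = {f. \<forall>e>0. \<exists>g\<in>GrassSum. \<forall>x. norm (f x - g x) \<le> e}"

definition tau :: "'a::euclidean_space set \<Rightarrow> ('a \<Rightarrow> complex) \<Rightarrow> 'a \<Rightarrow> complex" where
  "tau Y \<phi> x = Lim at_top (\<lambda>t::real. \<phi> (x + t *\<^sub>R (SOME y. y \<in> Y \<and> y \<noteq> 0)))"

end

theory Submission
  imports Defs
begin


lemma infdist_lower: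
  assumes "A \<noteq> {}" "\<And>a. a \<in> A \<Longrightarrow> d \<le> dist x a"
  shows "d \<le> infdist x A"
  using assms by (simp add: infdist_notempty cINF_greatest)

lemma infdist_scale:
  fixes Z :: "'a::euclidean_space set"
  assumes "subspace Z"
  shows "\<bar>c\<bar> * infdist x Z \<le> infdist (c *\<^sub>R x) Z"
proof (cases "c = 0")
  case True then show ?thesis by (simp add: infdist_nonneg)
next
  case False
  have ne: "Z \<noteq> {}" using assms subspace_0 by blast
  show ?thesis
  proof (rule infdist_lower[OF ne])
    fix a assume a: "a \<in> Z"
    have a': "(1/c) *\<^sub>R a \<in> Z" using assms a by (simp add: subspace_scale)
    have "dist (c *\<^sub>R x) a = norm (c *\<^sub>R (x - (1/c) *\<^sub>R a))"
      using False by (simp add: dist_norm scaleR_diff_right)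
    also have "\<dots> = \<bar>c\<bar> * dist x ((1/c) *\<^sub>R a)" by (simp add: dist_norm)
    finally show "\<bar>c\<bar> * infdist x Z \<le> dist (c *\<^sub>R x) a"
      using infdist_le[OF a', of x] by (simp add: mult_left_mono)
  qed
qed

lemma C0quot_lim:
  fixes Z :: "'a::euclidean_space set"
  assumes Z: "subspace Z" and g: "g \<in> C0quot Z" and y: "y \<noteq> 0"
  shows "((\<lambda>t::real. g (x + t *\<^sub>R y)) \<longlongrightarrow> (if y \<in> Z then g x else 0)) at_top"
proof (cases "y \<in> Z")
  case True
  have "g (x + t *\<^sub>R y) = g x" for t
    using g True Z unfolding C0quot_def by (simp add: subspace_scale)
  then show ?thesis using True by simp
next
  case False
  have ne: "Z \<noteq> {}" using Z subspace_0 by blast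
  have d: "infdist y Z > 0"
    using infdist_pos_not_in_closed[OF closed_subspace[OF Z] ne False] .
  show ?thesis
  proof (simp add: False, rule tendstoI)
    fix e :: real assume e: "e > 0"
    obtain R where R: "\<And>z. R \<le> infdist z Z \<Longrightarrow> norm (g z) < e"
      using g e unfolding C0quot_def by blast
    have H: "norm (g (x + t *\<^sub>R y)) < e" if t: "t \<ge> max 0 ((R + norm x) / infdist y Z)" for t
    proof -
      have "t * infdist y Z \<ge> R + norm x" using t d by (simp add: field_simps)
      moreover have "\<bar>t\<bar> * infdist y Z \<le> infdist (t *\<^sub>R y) Z" by (rule infdist_scale[OF Z])
      moreover have "infdist (t *\<^sub>R y) Z \<le> infdist (x + t *\<^sub>R y) Z + dist (t *\<^sub>R y) (x + t *\<^sub>R y)"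
        by (rule infdist_triangle)
      moreover have "dist (t *\<^sub>R y) (x + t *\<^sub>R y) = norm x" by (simp add: dist_norm)
      ultimately have "R \<le> infdist (x + t *\<^sub>R y) Z" using t by auto
      then show ?thesis by (rule R)
    qed
    show "\<forall>\<^sub>F t in at_top. dist (g (x + t *\<^sub>R y)) 0 < e"
      unfolding eventually_at_top_linorder
      by (rule exI[of _ "max 0 ((R + norm x) / infdist y Z)"], intro allI impI, simp add: dist_norm H)
  qed
qed

lemma GrassSum_lim:
  fixes Ys :: "nat \<Rightarrow> 'a::euclidean_space set"
  assumes "\<forall>i<n. subspace (Ys i) \<and> gs i \<in> C0quot (Ys i)" and y: "y \<noteq> 0"
  shows "((\<lambda>t::real. \<Sum>i<n. gs i (x + t *\<^sub>R y)) \<longlongrightarrow> (\<Sum>i<n. if y \<in> Ys i then gs i x else 0)) at_top"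
  using assms by (intro tendsto_sum C0quot_lim) auto


lemma approx_lim1:
  fixes F :: "real \<Rightarrow> complex"
  assumes P: "\<And>n. \<forall>t. norm (F t - H n t) \<le> inverse (real (Suc n))"
    and HL: "\<And>n. (H n \<longlongrightarrow> Ls n) at_top"
    and L: "Ls \<longlonglongrightarrow> L"
  shows "(F \<longlongrightarrow> L) at_top"
proof (rule tendstoI)
  fix e :: real assume e: "e > 0"
  have e3: "e/3 > 0" using e by simp
  have ev1: "\<forall>\<^sub>F n in sequentially. dist (inverse (real (Suc n))) 0 < e/3"
    by (rule tendstoD[OF LIMSEQ_inverse_real_of_nat e3])
  have ev2: "\<forall>\<^sub>F n in sequentially. dist (Ls n) L < e/3"
    by (rule tendstoD[OF L e3])
  obtain N where N: "\<And>n. n \<ge> N \<Longrightarrow> dist (inverse (real (Suc n))) 0 < e/3 \<and> dist (Ls n) L < e/3"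
    using eventually_conj[OF ev1 ev2] unfolding eventually_sequentially by blast
  define n where "n = N"
  have n: "inverse (real (Suc n)) < e/3" "dist (Ls n) L < e/3"
    using N[of n] unfolding n_def by auto
  have ev3: "\<forall>\<^sub>F t in at_top. dist (H n t) (Ls n) < e/3"
    by (rule tendstoD[OF HL e3])
  show "\<forall>\<^sub>F t in at_top. dist (F t) L < e"
  proof (rule eventually_mono[OF ev3])
    fix t assume a: "dist (H n t) (Ls n) < e/3"
    have d1: "dist (F t) (H n t) = norm (F t - H n t)" by (simp add: dist_norm)
    have d2: "norm (F t - H n t) \<le> inverse (real (Suc n))" using P by blast
    show "dist (F t) L < e"
      using dist_triangle[of "F t" L "H n t"] dist_triangle[of "H n t" L "Ls n"] d1 d2 a n by linarith
  qed
qed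

lemma approx_lim:
  fixes F G :: "real \<Rightarrow> complex"
  assumes A: "\<And>e. e > 0 \<Longrightarrow> \<exists>h k l. (\<forall>t. norm (F t - h t) \<le> e) \<and> (\<forall>t. norm (G t - k t) \<le> e)
      \<and> (h \<longlongrightarrow> l) at_top \<and> (k \<longlongrightarrow> l) at_top"
  shows "\<exists>L. (F \<longlongrightarrow> L) at_top \<and> (G \<longlongrightarrow> L) at_top"
proof -
  have "\<forall>n. \<exists>h k l. (\<forall>t. norm (F t - h t) \<le> inverse (real (Suc n))) \<and> (\<forall>t. norm (G t - k t) \<le> inverse (real (Suc n)))
      \<and> (h \<longlongrightarrow> l) at_top \<and> (k \<longlongrightarrow> l) at_top"
    using A by simp
  then obtain H K Ls where P: "\<And>n. (\<forall>t. norm (F t - H n t) \<le> inverse (real (Suc n))) \<and> (\<forall>t. norm (G t - K n t) \<le> inverse (real (Suc n)))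
      \<and> (H n \<longlongrightarrow> Ls n) at_top \<and> (K n \<longlongrightarrow> Ls n) at_top"
    by metis
  have bnd: "norm (Ls n - Ls m) \<le> inverse (real (Suc n)) + inverse (real (Suc m))" for n m
  proof (rule tendsto_le[OF trivial_limit_at_top_linorder tendsto_const])
    show "((\<lambda>t. norm (H n t - H m t)) \<longlongrightarrow> norm (Ls n - Ls m)) at_top"
      using P by (intro tendsto_intros) auto
    show "\<forall>\<^sub>F t in at_top. norm (H n t - H m t) \<le> inverse (real (Suc n)) + inverse (real (Suc m))"
    proof (rule always_eventually, rule allI)
      fix t
      have eq: "H n t - H m t = (F t - H m t) - (F t - H n t)" by simp
      have "norm (H n t - H m t) \<le> norm (F t - H n t) + norm (F t - H m t)"
        unfolding eq using norm_triangle_ineq4[of "F t - H m t" "F t - H n t"] by linarith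
      moreover have "norm (F t - H n t) \<le> inverse (real (Suc n))" using P[of n] by blast
      moreover have "norm (F t - H m t) \<le> inverse (real (Suc m))" using P[of m] by blast
      ultimately show "norm (H n t - H m t) \<le> inverse (real (Suc n)) + inverse (real (Suc m))"
        by linarith
    qed
  qed
  have "Cauchy Ls"
  proof (rule metric_CauchyI)
    fix e :: real assume e: "e > 0"
    obtain M where M: "inverse (real (Suc M)) < e/2"
      using reals_Archimedean[of "e/2"] e by auto
    have "dist (Ls m) (Ls n) < e" if "m \<ge> M" "n \<ge> M" for m n
    proof -
      have "inverse (real (Suc m)) \<le> inverse (real (Suc M))" "inverse (real (Suc n)) \<le> inverse (real (Suc M))"
        using that by (auto simp: field_simps)
      then show ?thesis using bnd[of m n] M unfolding dist_norm by linarith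
    qed
    then show "\<exists>M. \<forall>m\<ge>M. \<forall>n\<ge>M. dist (Ls m) (Ls n) < e" by blast
  qed
  then obtain L where L: "Ls \<longlonglongrightarrow> L" using Cauchy_convergent_iff convergent_def by blast
  have p1: "\<And>n. \<forall>t. norm (F t - H n t) \<le> inverse (real (Suc n))" using P by blast
  have p2: "\<And>n. \<forall>t. norm (G t - K n t) \<le> inverse (real (Suc n))" using P by blast
  have p3: "\<And>n. (H n \<longlongrightarrow> Ls n) at_top" using P by blast
  have p4: "\<And>n. (K n \<longlongrightarrow> Ls n) at_top" using P by blast
  have "(F \<longlongrightarrow> L) at_top" by (rule approx_lim1[OF p1 p3 L])
  moreover have "(G \<longlongrightarrow> L) at_top" by (rule approx_lim1[OF p2 p4 L])
  ultimately show ?thesis by blast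
qed
lemma C0quot_far:
  fixes Z :: "'a::euclidean_space set"
  assumes Z: "subspace Z" and g: "g \<in> C0quot Z" and uZ: "u \<notin> Z"
    and w: "\<And>k. real (Suc k) \<le> norm (w k)"
    and v: "(\<lambda>k. (1 / norm (w k)) *\<^sub>R w k) \<longlonglongrightarrow> u"
  shows "(\<lambda>k. g (w k)) \<longlonglongrightarrow> 0"
proof (rule tendstoI)
  fix e :: real assume e: "e > 0"
  have ne: "Z \<noteq> {}" using Z subspace_0 by blast
  define d where "d = infdist u Z"
  have d: "d > 0" unfolding d_def
    using infdist_pos_not_in_closed[OF closed_subspace[OF Z] ne uZ] .
  obtain R where R: "\<And>z. R \<le> infdist z Z \<Longrightarrow> norm (g z) < e"
    using g e unfolding C0quot_def by blast
  obtain N :: nat where N: "2 * \<bar>R\<bar> / d < real N" using reals_Archimedean2 by blast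
  have ev: "\<forall>\<^sub>F k in sequentially. dist ((1 / norm (w k)) *\<^sub>R w k) u < d/2 \<and> k \<ge> N"
    using tendstoD[OF v, of "d/2"] d eventually_ge_at_top[of N] by (auto intro: eventually_conj)
  show "\<forall>\<^sub>F k in sequentially. dist (g (w k)) 0 < e"
  proof (rule eventually_mono[OF ev])
    fix k assume k: "dist ((1 / norm (w k)) *\<^sub>R w k) u < d/2 \<and> k \<ge> N"
    define vk where "vk = (1 / norm (w k)) *\<^sub>R w k"
    have nw: "norm (w k) > 0" using w[of k] by linarith
    have wk: "w k = norm (w k) *\<^sub>R vk" unfolding vk_def using nw by simp
    have "infdist u Z \<le> infdist vk Z + dist u vk" by (rule infdist_triangle)
    then have iv: "infdist vk Z \<ge> d/2" using k unfolding d_def vk_def by (simp add: dist_commute)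
    have "\<bar>norm (w k)\<bar> * infdist vk Z \<le> infdist (w k) Z"
      using infdist_scale[OF Z, of "norm (w k)" vk] wk by simp
    moreover have "norm (w k) * (d/2) \<le> norm (w k) * infdist vk Z"
      using iv nw by (intro mult_left_mono) auto
    moreover have "real (Suc k) * (d/2) \<le> norm (w k) * (d/2)"
      using w[of k] d by (intro mult_right_mono) auto
    moreover have "2 * \<bar>R\<bar> / d < real (Suc k)" using N k by linarith
    then have "\<bar>R\<bar> < real (Suc k) * (d/2)" using d by (simp add: field_simps)
    ultimately have "R \<le> infdist (w k) Z" using nw abs_ge_self[of R] by linarith
    then show "dist (g (w k)) 0 < e" using R by simp
  qed
qed


lemma line_mult:
  fixes Y :: "'a::euclidean_space set"
  assumes "subspace Y" "dim Y = 1" "y \<in> Y" "y \<noteq> 0" "z \<in> Y"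
  shows "\<exists>c. z = c *\<^sub>R y"
proof (rule ccontr)
  assume nz: "\<not> (\<exists>c. z = c *\<^sub>R y)"
  then have zs: "z \<notin> span {y}" by (auto simp: span_singleton)
  have "independent {y}" using assms(4) by simp
  then have ind: "independent {z, y}" using zs by (simp add: independent_insert)
  have "z \<noteq> y" using nz by (metis scaleR_one)
  then have "card {z, y} = 2" by simp
  moreover have "card {z, y} \<le> dim Y"
    using independent_card_le_dim[OF _ ind, of Y] assms by auto
  ultimately show False using assms(2) by simp
qed

lemma GrassSum_cont: "g \<in> GrassSum \<Longrightarrow> continuous_on UNIV g"
  unfolding GrassSum_def C0quot_def by (auto intro!: continuous_on_sum)

lemma part1:
  fixes \<phi> :: "'a::euclidean_space \<Rightarrow> complex"
  assumes phi: "\<phi> \<in> Grassmann" and Y: "subspace Y" "dim Y = 1" and y: "y \<in> Y" "y \<noteq> 0"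
  shows "((\<lambda>t::real. \<phi> (x + t *\<^sub>R y)) \<longlongrightarrow> tau Y \<phi> x) at_top"
proof -
  define y0 where "y0 = (SOME y. y \<in> Y \<and> y \<noteq> 0)"
  have y0: "y0 \<in> Y \<and> y0 \<noteq> 0" unfolding y0_def by (rule someI_ex) (use y in blast)
  obtain c where c: "y0 = c *\<^sub>R y" using line_mult[OF Y y] y0 by blast
  have c0: "c \<noteq> 0" using c y0 by auto
  have mem: "y0 \<in> Z \<longleftrightarrow> y \<in> Z" if "subspace Z" for Z
  proof
    assume "y0 \<in> Z"
    then have "(1/c) *\<^sub>R y0 \<in> Z" using that by (simp add: subspace_scale)
    then show "y \<in> Z" using c c0 by simp
  next
    assume "y \<in> Z" then show "y0 \<in> Z" using c that by (simp add: subspace_scale)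
  qed
  have "\<exists>L. ((\<lambda>t::real. \<phi> (x + t *\<^sub>R y)) \<longlongrightarrow> L) at_top \<and> ((\<lambda>t::real. \<phi> (x + t *\<^sub>R y0)) \<longlongrightarrow> L) at_top"
  proof (rule approx_lim)
    fix e :: real assume e: "e > 0"
    obtain g where g: "g \<in> GrassSum" "\<And>x. norm (\<phi> x - g x) \<le> e"
      using phi e unfolding Grassmann_def by blast
    obtain n :: nat and Ys gs where G: "\<forall>i<n. subspace (Ys i) \<and> gs i \<in> C0quot (Ys i)"
      and geq: "g = (\<lambda>x. \<Sum>i<n. gs i x)" using g(1) unfolding GrassSum_def mem_Collect_eq by (elim exE conjE) auto
    have l1: "((\<lambda>t::real. g (x + t *\<^sub>R y)) \<longlongrightarrow> (\<Sum>i<n. if y \<in> Ys i then gs i x else 0)) at_top"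
      unfolding geq using GrassSum_lim[OF G y(2)] .
    have "((\<lambda>t::real. g (x + t *\<^sub>R y0)) \<longlongrightarrow> (\<Sum>i<n. if y0 \<in> Ys i then gs i x else 0)) at_top"
      unfolding geq using GrassSum_lim[OF G] y0 by blast
    moreover have "(\<Sum>i<n. if y0 \<in> Ys i then gs i x else 0) = (\<Sum>i<n. if y \<in> Ys i then gs i x else 0)"
      using G mem by (intro sum.cong) auto
    ultimately show "\<exists>h k l. (\<forall>t. norm (\<phi> (x + t *\<^sub>R y) - h t) \<le> e) \<and> (\<forall>t. norm (\<phi> (x + t *\<^sub>R y0) - k t) \<le> e)
      \<and> (h \<longlongrightarrow> l) at_top \<and> (k \<longlongrightarrow> l) at_top"
      using l1 g(2) by (intro exI[of _ "\<lambda>t. g (x + t *\<^sub>R y)"] exI[of _ "\<lambda>t. g (x + t *\<^sub>R y0)"]) auto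
  qed
  then obtain L where L: "((\<lambda>t::real. \<phi> (x + t *\<^sub>R y)) \<longlongrightarrow> L) at_top" "((\<lambda>t::real. \<phi> (x + t *\<^sub>R y0)) \<longlongrightarrow> L) at_top"
    by blast
  have "tau Y \<phi> x = L" unfolding tau_def y0_def[symmetric]
    by (rule tendsto_Lim[OF trivial_limit_at_top_linorder L(2)])
  then show ?thesis using L(1) by simp
qed



lemma nt1: "norm (a - b) \<le> c \<Longrightarrow> norm b \<le> norm a + (c::real)" for a b :: complex
  using norm_triangle_sub[of b a] norm_minus_commute[of b a] by linarith

lemma nt2: "norm (a - b) \<le> c \<Longrightarrow> norm a \<le> norm b + (c::real)" for a b :: complex
  using norm_triangle_sub[of a b] by linarith

lemma part2:
  fixes \<phi> :: "'a::euclidean_space \<Rightarrow> complex"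
  assumes phi: "\<phi> \<in> Grassmann" and T: "\<forall>Y. subspace Y \<and> dim Y = 1 \<longrightarrow> tau Y \<phi> = (\<lambda>x. 0)"
  shows "\<phi> \<in> C0"
proof -
  have "\<forall>n. \<exists>g. g \<in> GrassSum \<and> (\<forall>x. norm (\<phi> x - g x) \<le> inverse (real (Suc n)))"
  proof
    fix n
    have p: "inverse (real (Suc n)) > 0" by simp
    show "\<exists>g. g \<in> GrassSum \<and> (\<forall>x. norm (\<phi> x - g x) \<le> inverse (real (Suc n)))"
      using phi p unfolding Grassmann_def by blast
  qed
  then obtain G where G: "\<And>n. G n \<in> GrassSum" "\<And>n x. norm (\<phi> x - G n x) \<le> inverse (real (Suc n))"
    by metis
  have "uniform_limit UNIV G \<phi> sequentially"
    unfolding uniform_limit_iff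
  proof (intro allI impI)
    fix e :: real assume e: "e > 0"
    obtain N where N: "inverse (real (Suc N)) < e"
      using reals_Archimedean[OF e] by auto
    have "\<forall>x\<in>UNIV. dist (G n x) (\<phi> x) < e" if "n \<ge> N" for n
    proof
      fix x
      have "inverse (real (Suc n)) \<le> inverse (real (Suc N))" using that by (auto simp: field_simps)
      moreover have "dist (G n x) (\<phi> x) = norm (\<phi> x - G n x)" by (simp add: dist_norm norm_minus_commute)
      ultimately show "dist (G n x) (\<phi> x) < e" using G(2)[of x n] N by linarith
    qed
    then show "\<forall>\<^sub>F n in sequentially. \<forall>x\<in>UNIV. dist (G n x) (\<phi> x) < e"
      unfolding eventually_sequentially by blast
  qed
  then have cont: "continuous_on UNIV \<phi>"
    by (rule uniform_limit_theorem[rotated]) (auto intro!: always_eventually GrassSum_cont G(1))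
  have lim: "(\<phi> \<longlongrightarrow> 0) at_infinity"
  proof (rule ccontr)
    assume "\<not> (\<phi> \<longlongrightarrow> 0) at_infinity"
    then obtain e :: real where e: "e > 0" and ne: "\<not> (\<forall>\<^sub>F x in at_infinity. dist (\<phi> x) 0 < e)"
      unfolding tendsto_iff by blast
    have "\<forall>k. \<exists>x. real (Suc k) \<le> norm x \<and> e \<le> norm (\<phi> x)"
      using ne unfolding eventually_at_infinity by (auto simp: not_less)
    then obtain xs where xs: "\<And>k. real (Suc k) \<le> norm (xs k)" "\<And>k. e \<le> norm (\<phi> (xs k))"
      by metis
    obtain g where g: "g \<in> GrassSum" "\<And>x. norm (\<phi> x - g x) \<le> e/4"
    proof -
      have e4: "e/4 > 0" using e by simp
      then show ?thesis using phi that unfolding Grassmann_def by blast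
    qed
    obtain n :: nat and Ys gs where GS: "\<forall>i<n. subspace (Ys i) \<and> gs i \<in> C0quot (Ys i)"
      and geq: "g = (\<lambda>x. \<Sum>i<n. gs i x)" using g(1) unfolding GrassSum_def mem_Collect_eq by (elim exE conjE) auto
    define v where "v k = (1 / norm (xs k)) *\<^sub>R xs k" for k
    have nx: "norm (xs k) > 0" for k using xs(1)[of k] by linarith
    have vs: "v k \<in> sphere 0 1" for k using nx[of k] unfolding v_def by simp
    have vs': "\<forall>k. v k \<in> sphere 0 1" using vs by blast
    obtain u r where u: "u \<in> sphere 0 1" and r: "strict_mono r" and vr: "(v \<circ> r) \<longlonglongrightarrow> u"
      by (rule seq_compactE[OF compact_imp_seq_compact[OF compact_sphere[of "0::'a" 1]] vs'])
    have u0: "u \<noteq> 0" using u by auto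
    have Ysp: "subspace (span {u})" "dim (span {u}) = 1" "u \<in> span {u}"
      using u0 by (auto simp: indep_card_eq_dim_span span_base)
    have phi0: "((\<lambda>t::real. \<phi> (z + t *\<^sub>R u)) \<longlongrightarrow> 0) at_top" for z
      using part1[OF phi Ysp(1,2,3) u0, of z] T Ysp by simp
    define h where "h z = (\<Sum>i<n. if u \<in> Ys i then gs i z else 0)" for z
    have hb: "norm (h z) \<le> e/4" for z
    proof (rule tendsto_le[OF trivial_limit_at_top_linorder])
      have "((\<lambda>t::real. norm (\<phi> (z + t *\<^sub>R u))) \<longlongrightarrow> 0) at_top"
        using tendsto_norm_zero[OF phi0[of z]] .
      from tendsto_add[OF this tendsto_const[of "e/4"]]
      show "((\<lambda>t::real. norm (\<phi> (z + t *\<^sub>R u)) + e/4) \<longlongrightarrow> e/4) at_top" by simp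
      show "((\<lambda>t::real. norm (g (z + t *\<^sub>R u))) \<longlongrightarrow> norm (h z)) at_top"
        unfolding geq h_def by (intro tendsto_norm GrassSum_lim GS u0)
      show "\<forall>\<^sub>F t in at_top. norm (g (z + t *\<^sub>R u)) \<le> norm (\<phi> (z + t *\<^sub>R u)) + e/4"
        using g(2) by (intro always_eventually allI nt1)
    qed
    define w where "w k = xs (r k)" for k
    have w1: "real (Suc k) \<le> norm (w k)" for k
      using xs(1)[of "r k"] seq_suble[OF r, of k] unfolding w_def by linarith
    have wv: "(\<lambda>k. (1 / norm (w k)) *\<^sub>R w k) \<longlonglongrightarrow> u"
      using vr unfolding w_def v_def comp_def .
    define J where "J z = (\<Sum>i<n. if u \<in> Ys i then 0 else gs i z)" for z
    have "(\<lambda>k. J (w k)) \<longlonglongrightarrow> (\<Sum>i<n. 0)"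
      unfolding J_def
    proof (rule tendsto_sum)
      fix i assume "i \<in> {..<n}"
      then show "(\<lambda>k. if u \<in> Ys i then 0 else gs i (w k)) \<longlonglongrightarrow> 0"
      proof (cases "u \<in> Ys i")
        case True then show ?thesis by simp
      next
        case False
        have "i < n" using \<open>i \<in> {..<n}\<close> by simp
        then have "(\<lambda>k. gs i (w k)) \<longlonglongrightarrow> 0"
          using GS False C0quot_far[of "Ys i" "gs i" u w, OF _ _ _ w1 wv] by blast
        then show ?thesis using False by simp
      qed
    qed
    then have "\<forall>\<^sub>F k in sequentially. dist (J (w k)) 0 < e/4"
      using e by (intro tendstoD) auto
    then obtain k where k: "norm (J (w k)) < e/4"
      unfolding eventually_sequentially by auto
    have gs: "g z = h z + J z" for z
      unfolding geq h_def J_def by (simp add: sum.distrib[symmetric] if_distrib cong: if_cong)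
    have "norm (g (w k)) < e/2"
      using gs[of "w k"] k hb[of "w k"] norm_triangle_ineq[of "h (w k)" "J (w k)"] by simp
    moreover have "norm (\<phi> (w k)) \<le> norm (g (w k)) + e/4"
      using g(2)[of "w k"] by (rule nt2)
    moreover have "e \<le> norm (\<phi> (w k))" unfolding w_def by (rule xs(2))
    ultimately show False using e by linarith
  qed
  show ?thesis unfolding C0_def using cont lim by simp
qed

theorem mainTheorem16:
  fixes \<phi> :: "'a::euclidean_space \<Rightarrow> complex"
  assumes "\<phi> \<in> Grassmann"
  shows "(\<forall>Y. subspace Y \<and> dim Y = 1 \<longrightarrow>
            (\<forall>y\<in>Y - {0}. \<forall>x. ((\<lambda>t::real. \<phi> (x + t *\<^sub>R y)) \<longlongrightarrow> tau Y \<phi> x) at_top))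
       \<and> ((\<forall>Y. subspace Y \<and> dim Y = 1 \<longrightarrow> tau Y \<phi> = (\<lambda>x. 0)) \<longrightarrow> \<phi> \<in> C0)"
  using part1[OF assms] part2[OF assms] by blast
end
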